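(* Let $\{G_i\}$ be a family of connected graphs with common induced subgraph $J$, embedded as $J_i\subseteq G_i$, and let $H=\amalg\{(G_i|J_i)\}$. If $a\in V(H)$ and $uv\in\parallel(J_i:G_i)$ satisfy $d_H(a,u)\neq d_H(a,v)$, then $a\in V(G_i-J_i)$.
   Context: All graphs are finite, simple, non-null and connected; $d_G$ is shortest-path distance in $G$. $J$ is a common induced subgraph of each $G_i$ via injective maps $\iota_i:V(J)\to V(G_i)$ with $\iota_i(x)\iota_i(y)\in E(G_i)$ iff $xy\in E(J)$; $J_i$ is the subgraph of $G_i$ induced by $\iota_i(V(J))$. The $J$-amalgamation $H=\amalg\{(G_i|J_i)\}$ is obtained from the disjoint union of the $G_i$ by identifying, for each $x\in V(J)$, all vertices $\iota_i(x)$ into a single vertex; each $G_i$ is regarded as a subgraph of $H$, so $V(H)=V(J)\cup\bigcup_iV(G_i-J_i)$. $\parallel(J_i:G_i)$ denotes the set of edges $uv$ of $G_i-J_i$ (both ends outside $V(J_i)$) such that $d_{G_i}(w,u)=d_{G_i}(w,v)$ for every $w\in V(J_i)$. *)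

theory Defs
  imports Main
begin

definition graph :: "'v set \<Rightarrow> ('v \<times> 'v) set \<Rightarrow> bool" where
  "graph V E \<longleftrightarrow> finite V \<and> E \<subseteq> V \<times> V \<and> sym E \<and> irrefl E"

definition walk :: "'v set \<Rightarrow> ('v \<times> 'v) set \<Rightarrow> 'v list \<Rightarrow> bool" where
  "walk V E xs \<longleftrightarrow> xs \<noteq> [] \<and> set xs \<subseteq> V \<and>
     (\<forall>k. Suc k < length xs \<longrightarrow> (xs ! k, xs ! Suc k) \<in> E)"

definition connected_graph :: "'v set \<Rightarrow> ('v \<times> 'v) set \<Rightarrow> bool" where
  "connected_graph V E \<longleftrightarrow> graph V E \<and> V \<noteq> {} \<and>
     (\<forall>u\<in>V. \<forall>v\<in>V. \<exists>xs. walk V E xs \<and> hd xs = u \<and> last xs = v)"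

definition dist :: "'v set \<Rightarrow> ('v \<times> 'v) set \<Rightarrow> 'v \<Rightarrow> 'v \<Rightarrow> nat" where
  "dist V E u v = (LEAST n. \<exists>xs. walk V E xs \<and> hd xs = u \<and> last xs = v \<and> length xs = Suc n)"

text \<open>Vertices of H are
Inl x for x \<in> VJ (the identified copies) and Inr (i, v) for v \<in> V(G_i - J_i).\<close>

definition amalg_emb :: "'j set \<Rightarrow> ('i \<Rightarrow> 'j \<Rightarrow> 'v) \<Rightarrow> 'i \<Rightarrow> 'v \<Rightarrow> 'j + ('i \<times> 'v)" where
  "amalg_emb VJ \<iota> i v =
     (if v \<in> \<iota> i ` VJ then Inl (the_inv_into VJ (\<iota> i) v) else Inr (i, v))"

definition amalg_V :: "'i set \<Rightarrow> ('i \<Rightarrow> 'v set) \<Rightarrow> 'j set \<Rightarrow> ('i \<Rightarrow> 'j \<Rightarrow> 'v)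
    \<Rightarrow> ('j + ('i \<times> 'v)) set" where
  "amalg_V I V VJ \<iota> = Inl ` VJ \<union> (\<Union>i\<in>I. amalg_emb VJ \<iota> i ` V i)"

definition amalg_E :: "'i set \<Rightarrow> ('i \<Rightarrow> ('v \<times> 'v) set) \<Rightarrow> 'j set \<Rightarrow> ('i \<Rightarrow> 'j \<Rightarrow> 'v)
    \<Rightarrow> (('j + ('i \<times> 'v)) \<times> ('j + ('i \<times> 'v))) set" where
  "amalg_E I E VJ \<iota> =
     (\<Union>i\<in>I. (\<lambda>(u, v). (amalg_emb VJ \<iota> i u, amalg_emb VJ \<iota> i v)) ` E i)"

definition par_edges :: "'j set \<Rightarrow> ('j \<Rightarrow> 'v) \<Rightarrow> 'v set \<Rightarrow> ('v \<times> 'v) set \<Rightarrow> ('v \<times> 'v) set" where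
  "par_edges VJ \<iota>i Vi Ei =
     {(u, v) \<in> Ei. u \<notin> \<iota>i ` VJ \<and> v \<notin> \<iota>i ` VJ \<and>
        (\<forall>w\<in>\<iota>i ` VJ. dist Vi Ei w u = dist Vi Ei w v)}"

end

theory Submission imports Defs begin

lemma walk_single: "walk V E [x] \<longleftrightarrow> x \<in> V" by (simp add: walk_def)

lemma walk_Cons2: "walk V E (x # y # zs) \<longleftrightarrow> x \<in> V \<and> (x,y) \<in> E \<and> walk V E (y # zs)"
proof
  assume h: "walk V E (x # y # zs)"
  have e: "\<And>k. Suc k < length (x # y # zs) \<Longrightarrow> ((x # y # zs) ! k, (x # y # zs) ! Suc k) \<in> E"
    using h unfolding walk_def by blast
  have "(x,y) \<in> E" using e[of 0] by simp
  moreover have "walk V E (y # zs)" unfolding walk_def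
  proof (intro conjI allI impI)
    show "set (y # zs) \<subseteq> V" using h unfolding walk_def by simp
    fix k assume "Suc k < length (y # zs)"
    then show "((y # zs) ! k, (y # zs) ! Suc k) \<in> E" using e[of "Suc k"] by simp
  qed simp
  ultimately show "x \<in> V \<and> (x,y) \<in> E \<and> walk V E (y # zs)" using h by (simp add: walk_def)
next
  assume h: "x \<in> V \<and> (x,y) \<in> E \<and> walk V E (y # zs)"
  show "walk V E (x # y # zs)" unfolding walk_def
  proof (intro conjI allI impI)
    fix k assume k: "Suc k < length (x # y # zs)"
    show "((x # y # zs) ! k, (x # y # zs) ! Suc k) \<in> E"
    proof (cases k)
      case 0 then show ?thesis using h by simp
    next
      case (Suc k') then show ?thesis using h k unfolding walk_def by auto
    qed
  qed (use h in \<open>auto simp: walk_def\<close>)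
qed

lemma walk_append: "walk V E xs \<Longrightarrow> walk V E ys \<Longrightarrow> last xs = hd ys \<Longrightarrow> walk V E (xs @ tl ys)"
proof (induction xs)
  case Nil then show ?case by (simp add: walk_def)
next
  case (Cons x xs)
  show ?case
  proof (cases xs)
    case Nil
    then show ?thesis using Cons.prems by (cases ys) (auto simp: walk_def)
  next
    case (Cons y zs)
    then show ?thesis using Cons.prems Cons.IH by (auto simp: walk_Cons2)
  qed
qed

lemma walk_append_props: "walk V E xs \<Longrightarrow> walk V E ys \<Longrightarrow> last xs = hd ys \<Longrightarrow>
  hd (xs @ tl ys) = hd xs \<and> last (xs @ tl ys) = last ys \<and> length (xs @ tl ys) = length xs + length ys - 1"
  by (cases xs; cases ys) (auto simp: walk_def)

lemma walk_map: "walk V E xs \<Longrightarrow> (\<And>x. x\<in>V \<Longrightarrow> f x \<in> V') \<Longrightarrow> (\<And>p q. (p,q)\<in>E \<Longrightarrow> (f p, f q) \<in> E')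
  \<Longrightarrow> walk V' E' (map f xs)"
  unfolding walk_def by auto

lemma walk_take: "walk V E xs \<Longrightarrow> 0 < n \<Longrightarrow> walk V E (take n xs)"
  unfolding walk_def using set_take_subset by (fastforce)

lemma dist_le: "walk V E xs \<Longrightarrow> hd xs = p \<Longrightarrow> last xs = q \<Longrightarrow> dist V E p q \<le> length xs - 1"
  unfolding dist_def by (rule Least_le) (auto simp: walk_def)

lemma dist_ex: "walk V E xs \<Longrightarrow> hd xs = p \<Longrightarrow> last xs = q \<Longrightarrow>
   \<exists>ys. walk V E ys \<and> hd ys = p \<and> last ys = q \<and> length ys = Suc (dist V E p q)"
  unfolding dist_def by (rule LeastI_ex) (rule exI[of _ "length xs - 1"], auto simp: walk_def)


locale amalg =
  fixes I :: "'i set" and V :: "'i \<Rightarrow> 'v set" and E :: "'i \<Rightarrow> ('v \<times> 'v) set"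
    and VJ :: "'j set" and EJ :: "('j \<times> 'j) set" and \<iota> :: "'i \<Rightarrow> 'j \<Rightarrow> 'v"
  assumes conJ: "connected_graph VJ EJ"
    and conG: "\<And>k. k \<in> I \<Longrightarrow> connected_graph (V k) (E k)"
    and injI: "\<And>k. k \<in> I \<Longrightarrow> inj_on (\<iota> k) VJ \<and> \<iota> k ` VJ \<subseteq> V k"
begin

abbreviation "emb k \<equiv> amalg_emb VJ \<iota> k"
abbreviation "HV \<equiv> amalg_V I V VJ \<iota>"
abbreviation "HE \<equiv> amalg_E I E VJ \<iota>"

lemma emb_J: "k \<in> I \<Longrightarrow> w \<in> VJ \<Longrightarrow> emb k (\<iota> k w) = Inl w"
  unfolding amalg_emb_def using injI[of k] by (simp add: the_inv_into_f_f)

lemma emb_out: "x \<notin> \<iota> k ` VJ \<Longrightarrow> emb k x = Inr (k, x)"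
  unfolding amalg_emb_def by simp

lemma emb_Inr: "emb k p = Inr (j, y) \<Longrightarrow> k = j \<and> p = y \<and> p \<notin> \<iota> k ` VJ"
  unfolding amalg_emb_def by (auto split: if_splits)

lemma emb_Inl: "k \<in> I \<Longrightarrow> emb k p = Inl w \<Longrightarrow> w \<in> VJ \<and> p = \<iota> k w"
  unfolding amalg_emb_def using injI[of k]
  by (auto split: if_splits simp: the_inv_into_into f_the_inv_into_f)

lemma emb_V: "k \<in> I \<Longrightarrow> x \<in> V k \<Longrightarrow> emb k x \<in> HV"
  unfolding amalg_V_def by blast

lemma emb_E: "k \<in> I \<Longrightarrow> (p,q) \<in> E k \<Longrightarrow> (emb k p, emb k q) \<in> HE"
  unfolding amalg_E_def by force

lemma HE_cases: "(z1,z2) \<in> HE \<Longrightarrow> \<exists>k\<in>I. \<exists>p q. (p,q) \<in> E k \<and> z1 = emb k p \<and> z2 = emb k q"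
  unfolding amalg_E_def by auto

lemma E1: "(Inr (i,p), Inr (i,q)) \<in> HE \<Longrightarrow> (p,q) \<in> E i"
proof -
  assume "(Inr (i,p), Inr (i,q)) \<in> HE"
  then obtain k p' q' where "k \<in> I" "(p',q') \<in> E k" "Inr (i,p) = emb k p'" "Inr (i,q) = emb k q'"
    using HE_cases by blast
  then show ?thesis using emb_Inr by (metis)
qed

lemma E2: assumes "(z, Inr (i,q)) \<in> HE" "\<forall>y. z \<noteq> Inr (i,y)"
  shows "\<exists>w\<in>VJ. z = Inl w \<and> (\<iota> i w, q) \<in> E i"
proof -
  obtain k p q' where k: "k \<in> I" "(p,q') \<in> E k" "z = emb k p" "Inr (i,q) = emb k q'"
    using HE_cases[OF assms(1)] by blast
  then have "k = i" "q' = q" using emb_Inr[of k q' i q] by auto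
  show ?thesis
  proof (cases z)
    case (Inl w)
    then show ?thesis using emb_Inl[of k p w] k \<open>k = i\<close> \<open>q' = q\<close> by auto
  next
    case (Inr b)
    then obtain j y where "z = Inr (j,y)" by (cases b) auto
    then show ?thesis using emb_Inr[of k p j y] k \<open>k = i\<close> assms(2) by auto
  qed
qed

lemma Gwalk: "k \<in> I \<Longrightarrow> walk (V k) (E k) xs \<Longrightarrow> walk HV HE (map (emb k) xs)"
  by (rule walk_map) (auto intro: emb_V emb_E)

lemma Gconn: "k \<in> I \<Longrightarrow> x \<in> V k \<Longrightarrow> y \<in> V k \<Longrightarrow> \<exists>xs. walk (V k) (E k) xs \<and> hd xs = x \<and> last xs = y"
  using conG[of k] unfolding connected_graph_def by blast

lemma Gwalk_ex: assumes "k \<in> I" "x \<in> V k" "y \<in> V k"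
  shows "\<exists>xs. walk HV HE xs \<and> hd xs = emb k x \<and> last xs = emb k y"
proof -
  obtain xs where "walk (V k) (E k) xs" "hd xs = x" "last xs = y" using Gconn assms by blast
  then show ?thesis using Gwalk[OF assms(1)] 
    by (intro exI[of _ "map (emb k) xs"]) (auto simp: hd_map last_map walk_def)
qed

lemma reach_J: assumes "k0 \<in> I" "a \<in> HV" "w \<in> VJ"
  shows "\<exists>xs. walk HV HE xs \<and> hd xs = a \<and> last xs = Inl w"
proof -
  from assms(2) consider w0 where "w0 \<in> VJ" "a = Inl w0" | k x where "k \<in> I" "x \<in> V k" "a = emb k x"
    unfolding amalg_V_def by blast
  then show ?thesis
  proof cases
    case 1
    have h: "\<iota> k0 w0 \<in> V k0" "\<iota> k0 w \<in> V k0" using injI[OF assms(1)] 1 assms(3) by auto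
    from Gwalk_ex[OF assms(1) h] show ?thesis using 1 emb_J[OF assms(1)] assms(3) by simp
  next
    case 2
    then show ?thesis using Gwalk_ex[of k x "\<iota> k w"] injI[of k] assms emb_J by auto
  qed
qed

lemma upper: assumes "i \<in> I" "a \<in> HV" "w \<in> VJ" "y \<in> V i"
  shows "dist HV HE a (emb i y) \<le> dist HV HE a (Inl w) + dist (V i) (E i) (\<iota> i w) y"
proof -
  obtain p where p: "walk HV HE p" "hd p = a" "last p = Inl w" "length p = Suc (dist HV HE a (Inl w))"
    using reach_J[OF assms(1-3)] dist_ex by metis
  have "\<iota> i w \<in> V i" using injI[OF assms(1)] assms(3) by blast
  then obtain q where q: "walk (V i) (E i) q" "hd q = \<iota> i w" "last q = y" "length q = Suc (dist (V i) (E i) (\<iota> i w) y)"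
    using Gconn[OF assms(1) _ assms(4)] dist_ex by metis
  define q' where "q' = map (emb i) q"
  have q': "walk HV HE q'" "hd q' = Inl w" "last q' = emb i y" "length q' = length q"
    using Gwalk[OF assms(1) q(1)] q emb_J[OF assms(1,3)] unfolding q'_def
    by (auto simp: hd_map last_map walk_def)
  have "walk HV HE (p @ tl q')" using walk_append p q' by metis
  moreover have "hd (p @ tl q') = a \<and> last (p @ tl q') = emb i y \<and> length (p @ tl q') = length p + length q' - 1"
    using walk_append_props[OF p(1) q'(1)] p q' by metis
  ultimately have "dist HV HE a (emb i y) \<le> length p + length q' - 1 - 1" using dist_le by metis
  then show ?thesis using p q q' by simp
qed


lemma lower: assumes "i \<in> I" "a \<in> HV" "\<forall>y. a \<noteq> Inr (i,y)" "x \<in> V i" "x \<notin> \<iota> i ` VJ"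
  shows "\<exists>w\<in>VJ. dist HV HE a (Inl w) + dist (V i) (E i) (\<iota> i w) x \<le> dist HV HE a (emb i x)"
proof -
  obtain w0 where w0: "w0 \<in> VJ" using conJ unfolding connected_graph_def by blast
  obtain p where p: "walk HV HE p" "hd p = a" "last p = Inl w0"
    using reach_J[OF assms(1,2) w0] by blast
  have "\<iota> i w0 \<in> V i" using injI[OF assms(1)] w0 by blast
  then obtain q where q: "walk HV HE q" "hd q = Inl w0" "last q = emb i x"
    using Gwalk_ex[OF assms(1) _ assms(4)] emb_J[OF assms(1) w0] by metis
  have "walk HV HE (p @ tl q)" "hd (p @ tl q) = a" "last (p @ tl q) = emb i x"
    using walk_append[OF p(1) q(1)] walk_append_props[OF p(1) q(1)] p q by auto
  then obtain xs where xs: "walk HV HE xs" "hd xs = a" "last xs = Inr (i,x)"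
     "length xs = Suc (dist HV HE a (emb i x))"
    using dist_ex emb_out[OF assms(5)] by metis
  define n where "n = dist HV HE a (emb i x)"
  define isI where "isI z \<longleftrightarrow> (\<exists>y. z = Inr (i,y))" for z :: "'j + 'i \<times> 'v"
  define P where "P j \<longleftrightarrow> j < length xs \<and> \<not> isI (xs ! j)" for j
  define j where "j = (GREATEST j. P j)"
  have xs0: "xs \<noteq> []" using xs(1) by (simp add: walk_def)
  have "P 0" using xs0 xs(2) assms(3) unfolding P_def isI_def by (simp add: hd_conv_nth)
  then have Pj: "P j" and jmax: "\<And>k. P k \<Longrightarrow> k \<le> j"
    using GreatestI_nat[of P 0 "length xs"] Greatest_le_nat[of P _ "length xs"] unfolding j_def P_def
    by auto
  have lastI: "xs ! (length xs - 1) = Inr (i,x)" using xs(3) xs0 by (simp add: last_conv_nth)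
  have jlt: "Suc j < length xs"
  proof (rule ccontr)
    assume "\<not> Suc j < length xs"
    then have "j = length xs - 1" using Pj unfolding P_def by auto
    then show False using Pj lastI unfolding P_def isI_def by auto
  qed
  have after: "isI (xs ! k)" if "j < k" "k < length xs" for k
    using jmax[of k] that unfolding P_def by fastforce
  define pr where "pr z = snd (projr z)" for z :: "'j + 'i \<times> 'v"
  have prI: "xs ! k = Inr (i, pr (xs ! k))" if "j < k" "k < length xs" for k
    using after[OF that] unfolding isI_def pr_def by auto
  have edge: "(xs ! k, xs ! Suc k) \<in> HE" if "Suc k < length xs" for k
    using xs(1) that unfolding walk_def by blast
  obtain w where w: "w \<in> VJ" "xs ! j = Inl w" "(\<iota> i w, pr (xs ! Suc j)) \<in> E i"
    using E2[of "xs ! j" i "pr (xs ! Suc j)"] edge[OF jlt] prI[of "Suc j"] jlt Pj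
    unfolding P_def isI_def by auto
  have "walk HV HE (take (Suc j) xs)" using walk_take[OF xs(1)] by simp
  moreover have "hd (take (Suc j) xs) = a" using xs(2) xs0 by (simp add: hd_take)
  moreover have "last (take (Suc j) xs) = Inl w" using w(2) jlt by (simp add: take_Suc_conv_app_nth)
  ultimately have d1: "dist HV HE a (Inl w) \<le> j" using dist_le jlt by fastforce
  define ys where "ys = \<iota> i w # map (\<lambda>k. pr (xs ! k)) [Suc j..<length xs]"
  have lys: "length ys = length xs - j" using jlt unfolding ys_def by simp
  have ys0: "ys ! 0 = \<iota> i w" unfolding ys_def by simp
  have ysS: "ys ! Suc t = pr (xs ! (Suc j + t))" if "Suc j + t < length xs" for t
  proof -
    have "[Suc j..<length xs] ! t = Suc j + t" using that by (rule nth_upt)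
    then show ?thesis using that unfolding ys_def by simp
  qed
  have Eys: "(ys ! t, ys ! Suc t) \<in> E i" if "Suc t < length ys" for t
  proof (cases t)
    case 0
    then show ?thesis using ys0 ysS[of 0] w(3) jlt by simp
  next
    case (Suc t')
    have lt: "Suc (Suc j + t') < length xs" using that lys Suc jlt by simp
    have "(Inr (i, pr (xs ! (Suc j + t'))), Inr (i, pr (xs ! Suc (Suc j + t')))) \<in> HE"
      using edge[OF lt] prI[of "Suc j + t'"] prI[of "Suc (Suc j + t')"] lt by simp
    then have "(pr (xs ! (Suc j + t')), pr (xs ! (Suc j + Suc t'))) \<in> E i" using E1 by simp
    then show ?thesis using Suc ysS lt by simp
  qed
  have EV: "E i \<subseteq> V i \<times> V i" using conG[OF assms(1)] unfolding connected_graph_def graph_def by blast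
  have "set ys \<subseteq> V i"
  proof
    fix z assume "z \<in> set ys"
    then obtain t where t: "t < length ys" "z = ys ! t" by (auto simp: in_set_conv_nth)
    show "z \<in> V i"
    proof (cases t)
      case 0 then show ?thesis using t ys0 injI[OF assms(1)] w(1) by auto
    next
      case (Suc t') then show ?thesis using t Eys[of t'] EV by auto
    qed
  qed
  then have wys: "walk (V i) (E i) ys" unfolding walk_def using Eys ys_def by auto
  have lastys: "last ys = x"
  proof -
    have ne: "[Suc j..<length xs] \<noteq> []" using jlt by auto
    have "last ys = pr (xs ! (length xs - 1))" unfolding ys_def using ne jlt by (simp add: last_map)
    then show ?thesis using lastI unfolding pr_def by simp
  qed
  have d2: "dist (V i) (E i) (\<iota> i w) x \<le> length xs - j - 1"
    using dist_le[OF wys _ lastys] lys unfolding ys_def by simp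
  show ?thesis using d1 d2 xs(4) jlt w(1) by (intro bexI[of _ w]) auto
qed

end

theorem lemma1:
  fixes I :: "'i set" and V :: "'i \<Rightarrow> 'v set" and E :: "'i \<Rightarrow> ('v \<times> 'v) set"
    and VJ :: "'j set" and EJ :: "('j \<times> 'j) set" and \<iota> :: "'i \<Rightarrow> 'j \<Rightarrow> 'v"
    and i :: 'i and a :: "'j + ('i \<times> 'v)" and u v :: 'v
  assumes "finite I"
    and "connected_graph VJ EJ"
    and "\<And>k. k \<in> I \<Longrightarrow> connected_graph (V k) (E k)"
    and "\<And>k. k \<in> I \<Longrightarrow> inj_on (\<iota> k) VJ \<and> \<iota> k ` VJ \<subseteq> V k"
    and "\<And>k x y. k \<in> I \<Longrightarrow> x \<in> VJ \<Longrightarrow> y \<in> VJ \<Longrightarrow>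
           ((\<iota> k x, \<iota> k y) \<in> E k \<longleftrightarrow> (x, y) \<in> EJ)"
    and "i \<in> I"
    and "a \<in> amalg_V I V VJ \<iota>"
    and "(u, v) \<in> par_edges VJ (\<iota> i) (V i) (E i)"
    and "dist (amalg_V I V VJ \<iota>) (amalg_E I E VJ \<iota>) a (amalg_emb VJ \<iota> i u)
         \<noteq> dist (amalg_V I V VJ \<iota>) (amalg_E I E VJ \<iota>) a (amalg_emb VJ \<iota> i v)"
  shows "a \<in> amalg_emb VJ \<iota> i ` (V i - \<iota> i ` VJ)"
proof (rule ccontr)
  assume nc: "a \<notin> amalg_emb VJ \<iota> i ` (V i - \<iota> i ` VJ)"
  interpret amalg I V E VJ EJ \<iota>
    using assms(2,3,4) by unfold_locales auto
  have notI: "\<forall>y. a \<noteq> Inr (i,y)"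
  proof (intro allI notI)
    fix y assume ay: "a = Inr (i,y)"
    from assms(7) consider w0 where "a = Inl w0" | k z where "k \<in> I" "z \<in> V k" "a = emb k z"
      unfolding amalg_V_def by blast
    then show False
    proof cases
      case 1 then show ?thesis using ay by simp
    next
      case 2
      have "emb k z = Inr (i,y)" using 2 ay by simp
      then have "k = i" "z = y" "z \<notin> \<iota> k ` VJ" using emb_Inr by blast+
      then show ?thesis using nc 2 by blast
    qed
  qed
  have par: "(u,v) \<in> E i" "u \<notin> \<iota> i ` VJ" "v \<notin> \<iota> i ` VJ"
    "\<And>w. w \<in> VJ \<Longrightarrow> dist (V i) (E i) (\<iota> i w) u = dist (V i) (E i) (\<iota> i w) v"
    using assms(8) unfolding par_edges_def by auto
  have EV: "E i \<subseteq> V i \<times> V i" using assms(3)[OF assms(6)] unfolding connected_graph_def graph_def by blast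
  have uv: "u \<in> V i" "v \<in> V i" using par(1) EV by auto
  have le: "dist HV HE a (emb i x) \<le> dist HV HE a (emb i y)"
    if h: "x \<in> V i" "y \<in> V i" "y \<notin> \<iota> i ` VJ"
      "\<And>w. w \<in> VJ \<Longrightarrow> dist (V i) (E i) (\<iota> i w) x = dist (V i) (E i) (\<iota> i w) y" for x y
  proof -
    obtain w where w: "w \<in> VJ" "dist HV HE a (Inl w) + dist (V i) (E i) (\<iota> i w) y \<le> dist HV HE a (emb i y)"
      using lower[OF assms(6,7) notI h(2,3)] by blast
    have "dist HV HE a (emb i x) \<le> dist HV HE a (Inl w) + dist (V i) (E i) (\<iota> i w) x"
      using upper[OF assms(6,7) w(1) h(1)] .
    then show ?thesis using w h(4)[OF w(1)] by simp
  qed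
  have "dist HV HE a (emb i u) = dist HV HE a (emb i v)"
    using le[OF uv par(3) par(4)] le[OF uv(2,1) par(2) par(4)[symmetric]] by (rule antisym)
  then show False using assms(9) by simp
qed

end
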